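(* Let $\beta,\psi_0$ be real constants, $\kappa>0$, $K\neq0$, and $I=\{r>0: r>4K\}$. Set $\tilde{\mathcal{C}}\equiv0$, $\mathcal{V}\equiv0$, $\mathcal{A}(\psi)=\frac{3\beta}{8}\psi^2$, $C(r)=1$, $$A(r)=2-\frac{r}{2K}+\frac{\sqrt{r(r-4K)}}{2K},\qquad \psi(r)=\frac{\psi_0\big(\sqrt{r(r-4K)}-4K+r\big)\big(\sqrt{r(r-4K)}-2K+r\big)^{1/4}}{3K\,r^{3/4}\sqrt{r-4K}} .$$ Then $E^{(1)}_{tt}=E^{(1)}_{rr}=E^{(1)}_{\vartheta\vartheta}=E^{(1)}_{\psi}=0$ hold on $I$. (The metric ${\rm d}s^2=A^2{\rm d}t^2-A^{-2}{\rm d}r^2-r^2{\rm d}\Omega^2$ is asymptotically flat, with $A(r)\to1$ as $r\to\infty$, and for $K>0$ has a horizon $A(4K)=0$.)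
   Context: Metric ansatz ${\rm d}s^2=A(r)^2{\rm d}t^2-\frac{C(r)^2}{A(r)^2}{\rm d}r^2-r^2{\rm d}\Omega^2$, $\psi=\psi(r)$. Primes on $A,C,\psi$ are $r$-derivatives; $\mathcal{A}',\tilde{\mathcal{C}}',\tilde{\mathcal{C}}'',\mathcal{V}'$ are $\psi$-derivatives evaluated at $\psi(r)$. The real-tetrad reduced vacuum field equations of the scalar-torsion theory are: $E^{(1)}_{tt}:\ 0=\mathcal{A}\frac{A^2(-2rACA'-A^2(C-2rC')+C^3)}{r^2C^3}+\tilde{\mathcal{C}}'\Big(\frac{A^4\psi''}{C^2}-\frac{A^3\psi'(-rCA'+rAC'-2C^2)}{rC^3}\Big)-\frac{2A^3(A-C)\psi'\mathcal{A}'}{rC^2}+\frac{A^4\psi'^2\tilde{\mathcal{C}}''}{C^2}-\frac{\beta A^4\psi'^2}{2C^2}+\kappa^2A^2\mathcal{V}$; $E^{(1)}_{rr}:\ 0=-\frac{(2rAA'+A^2-C^2)\mathcal{A}}{r^2A^2}+\big(\frac{A'}{A}+\frac2r\big)\psi'\tilde{\mathcal{C}}'+\frac{\kappa^2C^2\mathcal{V}}{A^2}+\frac12\beta\psi'^2$; $E^{(1)}_{\vartheta\vartheta}:\ 0=-\frac{A\psi'(rA'+A-C)\mathcal{A}'}{rC^2}+\tilde{\mathcal{C}}'\Big(\frac{A\psi'(rCA'-rAC'+C^2)}{rC^3}+\frac{A^2\psi''}{C^2}\Big)+\frac{\mathcal{A}(-rCA'^2+A(rA'C'-C(rA''+2A'))+A^2C')}{rC^3}+\frac{A^2\psi'^2\tilde{\mathcal{C}}''}{C^2}-\frac{\beta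 A^2\psi'^2}{2C^2}+\kappa^2\mathcal{V}$; $E^{(1)}_{\psi}:\ 0=\frac{(A-C)(2rA'+A-C)\mathcal{A}'}{r^2C^2}+\frac{\beta A\psi'(2rCA'+A(2C-rC'))}{rC^3}+\frac{\beta A^2\psi''}{C^2}+\kappa^2\mathcal{V}'+\frac{\tilde{\mathcal{C}}'(rCA'(rA'-2C)+A(-r^2A'C'+rC(rA''+6A')-2C^2)+2A^2(C-rC'))}{r^2C^3}$. *)

theory Defs
  imports "HOL-Analysis.Analysis"
begin

text \<open>Reduced vacuum field equations of the scalar-torsion theory (real tetrad).
  Arguments: beta, kappa, the scalar functions calA, calCt (tilde C), calV of psi,
  the metric functions A, C of r, the scalar field psi of r, and the radius r.\<close>

definition E_tt :: "real \<Rightarrow> real \<Rightarrow> (real\<Rightarrow>real) \<Rightarrow> (real\<Rightarrow>real) \<Rightarrow> (real\<Rightarrow>real)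
    \<Rightarrow> (real\<Rightarrow>real) \<Rightarrow> (real\<Rightarrow>real) \<Rightarrow> (real\<Rightarrow>real) \<Rightarrow> real \<Rightarrow> real" where
  "E_tt \<beta> \<kappa> cA cC cV A C \<psi> r =
    (let a = A r; a1 = deriv A r; c = C r; c1 = deriv C r;
         s = \<psi> r; p1 = deriv \<psi> r; p2 = deriv (deriv \<psi>) r;
         SA = cA s; SA1 = deriv cA s; SC1 = deriv cC s; SC2 = deriv (deriv cC) s; SV = cV s
     in SA * (a^2 * (-2*r*a*c*a1 - a^2*(c - 2*r*c1) + c^3)) / (r^2 * c^3)
        + SC1 * (a^4 * p2 / c^2 - a^3 * p1 * (-r*c*a1 + r*a*c1 - 2*c^2) / (r * c^3))
        - 2 * a^3 * (a - c) * p1 * SA1 / (r * c^2)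
        + a^4 * p1^2 * SC2 / c^2
        - \<beta> * a^4 * p1^2 / (2 * c^2)
        + \<kappa>^2 * a^2 * SV)"

definition E_rr :: "real \<Rightarrow> real \<Rightarrow> (real\<Rightarrow>real) \<Rightarrow> (real\<Rightarrow>real) \<Rightarrow> (real\<Rightarrow>real)
    \<Rightarrow> (real\<Rightarrow>real) \<Rightarrow> (real\<Rightarrow>real) \<Rightarrow> (real\<Rightarrow>real) \<Rightarrow> real \<Rightarrow> real" where
  "E_rr \<beta> \<kappa> cA cC cV A C \<psi> r =
    (let a = A r; a1 = deriv A r; c = C r;
         s = \<psi> r; p1 = deriv \<psi> r;
         SA = cA s; SC1 = deriv cC s; SV = cV s
     in - (2*r*a*a1 + a^2 - c^2) * SA / (r^2 * a^2)
        + (a1 / a + 2 / r) * p1 * SC1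
        + \<kappa>^2 * c^2 * SV / a^2
        + 1/2 * \<beta> * p1^2)"

definition E_thth :: "real \<Rightarrow> real \<Rightarrow> (real\<Rightarrow>real) \<Rightarrow> (real\<Rightarrow>real) \<Rightarrow> (real\<Rightarrow>real)
    \<Rightarrow> (real\<Rightarrow>real) \<Rightarrow> (real\<Rightarrow>real) \<Rightarrow> (real\<Rightarrow>real) \<Rightarrow> real \<Rightarrow> real" where
  "E_thth \<beta> \<kappa> cA cC cV A C \<psi> r =
    (let a = A r; a1 = deriv A r; a2 = deriv (deriv A) r; c = C r; c1 = deriv C r;
         s = \<psi> r; p1 = deriv \<psi> r; p2 = deriv (deriv \<psi>) r;
         SA = cA s; SA1 = deriv cA s; SC1 = deriv cC s; SC2 = deriv (deriv cC) s; SV = cV s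
     in - a * p1 * (r*a1 + a - c) * SA1 / (r * c^2)
        + SC1 * (a * p1 * (r*c*a1 - r*a*c1 + c^2) / (r * c^3) + a^2 * p2 / c^2)
        + SA * (-r*c*a1^2 + a*(r*a1*c1 - c*(r*a2 + 2*a1)) + a^2*c1) / (r * c^3)
        + a^2 * p1^2 * SC2 / c^2
        - \<beta> * a^2 * p1^2 / (2 * c^2)
        + \<kappa>^2 * SV)"

definition E_psi :: "real \<Rightarrow> real \<Rightarrow> (real\<Rightarrow>real) \<Rightarrow> (real\<Rightarrow>real) \<Rightarrow> (real\<Rightarrow>real)
    \<Rightarrow> (real\<Rightarrow>real) \<Rightarrow> (real\<Rightarrow>real) \<Rightarrow> (real\<Rightarrow>real) \<Rightarrow> real \<Rightarrow> real" where
  "E_psi \<beta> \<kappa> cA cC cV A C \<psi> r =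
    (let a = A r; a1 = deriv A r; a2 = deriv (deriv A) r; c = C r; c1 = deriv C r;
         s = \<psi> r; p1 = deriv \<psi> r; p2 = deriv (deriv \<psi>) r;
         SA1 = deriv cA s; SC1 = deriv cC s; SV1 = deriv cV s
     in (a - c) * (2*r*a1 + a - c) * SA1 / (r^2 * c^2)
        + \<beta> * a * p1 * (2*r*c*a1 + a*(2*c - r*c1)) / (r * c^3)
        + \<beta> * a^2 * p2 / c^2
        + \<kappa>^2 * SV1
        + SC1 * (r*c*a1*(r*a1 - 2*c) + a*(-(r^2)*a1*c1 + r*c*(r*a2 + 6*a1) - 2*c^2)
                 + 2*a^2*(c - r*c1)) / (r^2 * c^3))"

end

theory Submission
  imports Defs
begin


lemma alA2: fixes y a b :: real assumes "y \<noteq> 0"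
  shows "((0*a + b*2)*y^2 - 2*a*(real 2*((0+a)*y^(2 - Suc 0))))/(y^2*y^2) = 2*b/y^2 - 4*a^2/y^3"
  using assms by (simp add: field_simps) (simp add: eval_nat_numeral algebra_simps)

lemma sqrt_chain:
  fixes f :: "real \<Rightarrow> real"
  assumes "(f has_real_derivative D) (at x)" "0 < f x"
  shows "((\<lambda>x. sqrt (f x)) has_real_derivative (D / (2 * sqrt (f x)))) (at x)"
  using DERIV_chain2[OF DERIV_real_sqrt[OF assms(2)] assms(1)] by (simp add: field_simps)


lemma deriv2_open:
  fixes f f1 f2 :: "real \<Rightarrow> real"
  assumes "open S" "x \<in> S"
    and d1: "\<And>y. y \<in> S \<Longrightarrow> (f has_real_derivative f1 y) (at y)"
    and d2: "\<And>y. y \<in> S \<Longrightarrow> (f1 has_real_derivative f2 y) (at y)"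
  shows "deriv f x = f1 x" "deriv (deriv f) x = f2 x"
proof -
  show "deriv f x = f1 x" using d1[OF assms(2)] by (rule DERIV_imp_deriv)
  have ev: "eventually (\<lambda>y. deriv f y = f1 y) (nhds x)"
    using eventually_nhds_in_open[OF assms(1,2)] by eventually_elim (use d1 DERIV_imp_deriv in blast)
  have "deriv (deriv f) x = deriv f1 x" by (rule deriv_cong_ev[OF ev refl])
  also have "\<dots> = f2 x" using d2[OF assms(2)] by (rule DERIV_imp_deriv)
  finally show "deriv (deriv f) x = f2 x" .
qed

lemma transf:
  fixes f g :: "real \<Rightarrow> real"
  assumes "open S" "\<And>y. y \<in> S \<Longrightarrow> f y = g y"
   "\<And>y. y \<in> S \<Longrightarrow> (g has_real_derivative g1 y) (at y)"
  shows "\<And>y. y \<in> S \<Longrightarrow> (f has_real_derivative g1 y) (at y)"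
  using has_field_derivative_transform_within_open assms by (metis)

context fixes K c :: real
begin
definition "W x = sqrt (1 - 4*K/x)"
definition "W1 x = 2*K/(x^2 * W x)"
definition "W2 x = -4*K/(x^3*W x) - 4*K^2/(x^4*(W x)^3)"
definition "At x = 2*W x/(1+W x)"
definition "A1 x = 2*W1 x/(1+W x)^2"
definition "A2 x = 2*W2 x/(1+W x)^2 - 4*(W1 x)^2/(1+W x)^3"
definition "Q x = sqrt (1 + W x)"
definition "Pt x = c*(1+W x)*Q x"
definition "P1 x = 3/2*c*W1 x*Q x"
definition "P2 x = 3/2*c*(W2 x*Q x + (W1 x)^2/(2*Q x))"


lemma Wpos: "0 < x \<Longrightarrow> 4*K < x \<Longrightarrow> W x > 0"
  unfolding W_def by (simp add: field_simps)

lemma dW: assumes "0 < x" "4*K < x" shows "(W has_real_derivative W1 x) (at x)"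
proof -
  have p: "1 - 4*K/x > 0" using assms by (simp add: field_simps)
  have d0: "((\<lambda>x. 1 - 4*K/x) has_real_derivative 4*K/x^2) (at x)"
    apply (rule derivative_eq_intros refl | (use assms in force))+
    using assms by (auto simp: field_simps power2_eq_square)
  have "((\<lambda>x. sqrt (1 - 4*K/x)) has_real_derivative (4*K/x^2) / (2 * sqrt (1 - 4*K/x))) (at x)"
    by (rule sqrt_chain[OF d0 p])
  moreover have "(4*K/x^2) / (2 * sqrt (1 - 4*K/x)) = W1 x" unfolding W1_def W_def
    using assms by (simp add: field_simps power2_eq_square)
  ultimately show ?thesis unfolding W_def[abs_def] by simp
qed

lemma dW1: assumes "0 < x" "4*K < x" shows "(W1 has_real_derivative W2 x) (at x)"
proof -
  have w: "W x > 0" using Wpos assms by blast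
  show ?thesis unfolding W1_def[abs_def]
    apply (rule derivative_eq_intros refl dW[OF assms] | (use assms w in force))+
    using w assms by (auto simp: W1_def W2_def field_simps power2_eq_square power3_eq_cube power4_eq_xxxx)
qed

lemma dAt: assumes "0 < x" "4*K < x" shows "(At has_real_derivative A1 x) (at x)"
proof -
  have w: "W x > 0" using Wpos assms by blast
  show ?thesis unfolding At_def[abs_def]
    apply (rule derivative_eq_intros refl dW[OF assms] | (use assms w in force))+
    using w assms by (auto simp: A1_def field_simps power2_eq_square)
qed

lemma dA1: assumes "0 < x" "4*K < x" shows "(A1 has_real_derivative A2 x) (at x)"
proof -
  have w: "W x > 0" using Wpos assms by blast
  have nz: "1 + W x \<noteq> 0" using w by simp
  show ?thesis unfolding A1_def[abs_def]
    apply (rule derivative_eq_intros refl dW[OF assms] dW1[OF assms] | (use assms w in force))+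
    unfolding A2_def by (rule alA2[OF nz])
qed

lemma Qsq: assumes "0 < x" "4*K < x" shows "(Q x)^2 = 1 + W x" "Q x > 0"
proof -
  have w: "W x > 0" using Wpos assms by blast
  show "(Q x)^2 = 1 + W x" "Q x > 0" using w by (auto simp: Q_def)
qed

lemma dQ: assumes "0 < x" "4*K < x" shows "(Q has_real_derivative W1 x/(2 * Q x)) (at x)"
proof -
  have w: "W x > 0" using Wpos assms by blast
  have p: "0 < (\<lambda>y. 1 + W y) x" using w by simp
  have d: "((\<lambda>y. 1 + W y) has_real_derivative W1 x) (at x)"
    using dW[OF assms] by (auto intro: derivative_eq_intros)
  from sqrt_chain[OF d p] show ?thesis unfolding Q_def[abs_def] by simp
qed

lemma dPt: assumes "0 < x" "4*K < x" shows "(Pt has_real_derivative P1 x) (at x)"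
proof -
  have w: "W x > 0" using Wpos assms by blast
  note q = Qsq[OF assms]
  have qq: "\<And>z. Q x * (Q x * z) = (1 + W x) * z" using q(1) by (metis mult.assoc power2_eq_square)
  show ?thesis unfolding Pt_def[abs_def]
    apply (rule derivative_eq_intros refl dW[OF assms] dQ[OF assms] | (use assms w q in force))+
    using w q by (auto simp: P1_def field_simps power2_eq_square qq)
qed

lemma dP1: assumes "0 < x" "4*K < x" shows "(P1 has_real_derivative P2 x) (at x)"
proof -
  have w: "W x > 0" using Wpos assms by blast
  note q = Qsq[OF assms]
  have qq: "\<And>z. Q x * (Q x * z) = (1 + W x) * z" using q(1) by (metis mult.assoc power2_eq_square)
  show ?thesis unfolding P1_def[abs_def]
    apply (rule derivative_eq_intros refl dW1[OF assms] dQ[OF assms] | (use assms w q in force))+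
    using w q by (auto simp: P2_def field_simps power2_eq_square qq)
qed
lemma Wsq: assumes "0 < x" "4*K < x" shows "(W x)^2 = 1 - 4*K/x"
  unfolding W_def using assms by (simp add: field_simps)

lemma W1alt: assumes "0 < x" "4*K < x" shows "W1 x = (1 - W x) * (1 + W x) / (2 * x * W x)"
proof -
  define w where "w = W x"
  have w: "w > 0" using Wpos assms unfolding w_def by blast
  have ws: "w^2 = 1 - 4*K/x" using Wsq[OF assms] unfolding w_def .
  define E where "E = (1 - w) * (1 + w)"
  have k: "K = x * E / 4" using ws assms unfolding E_def by (simp add: field_simps power2_eq_square)
  have e: "W1 x = 2*K/(x^2 * w)" unfolding W1_def w_def ..
  have "2*K/(x^2 * w) = E / (2 * x * w)" unfolding k using w assms
    by (simp add: field_simps power2_eq_square)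
  thus ?thesis unfolding e E_def w_def .
qed

lemma W2alt: assumes "0 < x" "4*K < x"
  shows "W2 x = -(1 - W x) * (1 + W x)/(x^2 * W x) - ((1 - W x) * (1 + W x))^2/(4 * x^2 * (W x)^3)"
proof -
  define w where "w = W x"
  have w: "w > 0" using Wpos assms unfolding w_def by blast
  have ws: "w^2 = 1 - 4*K/x" using Wsq[OF assms] unfolding w_def .
  define E where "E = (1 - w) * (1 + w)"
  have k: "K = x * E / 4" using ws assms unfolding E_def by (simp add: field_simps power2_eq_square)
  have t1: "-4*K/(x^3*w) = -E/(x^2 * w)" unfolding k using w assms
    by (simp add: field_simps power2_eq_square power3_eq_cube)
  have t2: "4*K^2/(x^4*w^3) = E^2/(4 * x^2 * w^3)" unfolding k using w assms
    by (simp add: field_simps power2_eq_square power3_eq_cube power4_eq_xxxx)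
  have "W2 x = -4*K/(x^3*w) - 4*K^2/(x^4*w^3)" unfolding W2_def w_def ..
  also have "\<dots> = -E/(x^2 * w) - E^2/(4 * x^2 * w^3)" using t1 t2 by simp
  finally show ?thesis unfolding E_def w_def by (simp only: minus_mult_left)
qed

lemma P2alt: assumes "0 < x" "4*K < x"
  shows "P2 x = 3/2 * (c * Q x) * (W2 x + (W1 x)^2/(2 * (1 + W x)))"
proof -
  note q = Qsq[OF assms]
  have "(W1 x)^2/(2 * Q x) = Q x * ((W1 x)^2/(2 * (Q x)^2))"
    using q(2) by (simp add: field_simps power2_eq_square)
  hence "(W1 x)^2/(2 * Q x) = Q x * ((W1 x)^2/(2 * (1 + W x)))" unfolding q(1) .
  then show ?thesis unfolding P2_def by (simp add: algebra_simps)
qed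
end


lemma pw4: fixes y::real assumes "y>0" shows "(y^4) powr (1/4) = y" "(y^4) powr (3/4) = y^3"
proof -
  have e: "y^4 = y powr 4" using powr_realpow[OF assms, of 4] by simp
  show "(y^4) powr (1/4) = y" unfolding e powr_powr using assms by simp
  have "(y^4) powr (3/4) = y powr 3" unfolding e powr_powr using assms by simp
  also have "\<dots> = y^3" using powr_realpow[OF assms, of 3] by simp
  finally show "(y^4) powr (3/4) = y^3" .
qed

lemma gA: fixes s v D :: real assumes "D = (s - v) * (s + v)" "s - v \<noteq> 0" "s + v \<noteq> 0" "s > 0"
  shows "2 - s^2 / (2 * (D/4)) + s * v / (2 * (D/4)) = 2 * (v / s) / (1 + v / s)"
proof -
  have D: "D \<noteq> 0" using assms by simp
  have sv: "s + v > 0 \<or> s + v < 0" using assms by linarith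
  show ?thesis using D assms(3,4) by (simp add: field_simps) (simp add: assms(1) algebra_simps power2_eq_square)
qed

lemma Aeq: fixes K x :: real assumes "K \<noteq> 0" "0 < x" "4 * K < x"
  shows "2 - x / (2 * K) + sqrt (x * (x - 4 * K)) / (2 * K) = At K x"
proof -
  define s v where "s = sqrt x" and "v = sqrt (x - 4 * K)"
  have s: "s > 0" "s^2 = x" using assms by (auto simp: s_def)
  have v: "v > 0" "v^2 = x - 4 * K" using assms by (auto simp: v_def)
  have sq: "sqrt (x * (x - 4 * K)) = s * v" by (simp add: s_def v_def real_sqrt_mult)
  have w: "W K x = v/s" unfolding W_def s_def v_def using assms
    by (simp add: real_sqrt_divide[symmetric] field_simps)
  have Kd: "K = (s^2 - v^2)/4" using s v by simp
  have ne: "s \<noteq> v" using assms Kd by auto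
  have ne2: "s + v \<noteq> 0" using s v by simp
  have ne3: "s - v \<noteq> 0" using ne by simp
  have f: "s^2 - v^2 = (s - v) * (s + v)" by (simp add: algebra_simps power2_eq_square)
  have g: "2 - s^2 / (2 * ((s^2 - v^2)/4)) + s * v / (2 * ((s^2 - v^2)/4)) = 2 * (v / s) / (1 + v / s)"
    by (rule gA[OF f ne3 ne2 s(1)])
  have xe: "x = s^2" using s by simp
  show ?thesis unfolding At_def w sq by (simp only: xe Kd g)
qed

lemma Peq: fixes K x \<psi>0 :: real assumes "K \<noteq> 0" "0 < x" "4 * K < x"
  shows "\<psi>0 * (sqrt (x * (x - 4 * K)) - 4 * K + x)
                 * (sqrt (x * (x - 4 * K)) - 2 * K + x) powr (1/4)
                 / (3 * K * x powr (3/4) * sqrt (x - 4 * K)) = Pt K (\<psi>0/(3 * K * 2 powr (1/4))) x"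
proof -
  define s v where "s = sqrt x" and "v = sqrt (x - 4 * K)"
  have s: "s > 0" "s^2 = x" using assms by (auto simp: s_def)
  have v: "v > 0" "v^2 = x - 4 * K" using assms by (auto simp: v_def)
  define m n where "m = sqrt s" and "n = sqrt (s+v)"
  have m: "m > 0" "m^2 = s" using s by (auto simp: m_def)
  have n: "n > 0" "n^2 = s + v" using s v by (auto simp: n_def)
  have sq: "sqrt (x * (x - 4 * K)) = s * v" by (simp add: s_def v_def real_sqrt_mult)
  have w: "W K x = v/s" unfolding W_def s_def v_def using assms
    by (simp add: real_sqrt_divide[symmetric] field_simps)
  have Kd: "K = (s^2 - v^2)/4" using s v by simp
  have xm: "x = m^4" using s m by (metis numeral_Bit0 power_add power2_eq_square mult_2 power_mult)
  have e1: "s * v - 4 * K + x = v * n^2" using s v n Kd by (simp add: algebra_simps power2_eq_square)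
  have n4: "n^4 = (s + v)^2" proof -
    have "(n^2)^2 = n^4" by (simp flip: power_mult)
    thus ?thesis using n(2) by simp
  qed
  have xe: "x = s^2" using s by simp
  have e2: "s * v - 2 * K + x = n^4 / 2" unfolding n4 Kd xe by (simp add: power2_eq_square field_simps)
  have p1: "(n^4/2) powr (1/4) = n / 2 powr (1/4)"
    using n by (simp add: powr_divide pw4)
  have p2: "x powr (3/4) = m^3" using xm m pw4 by simp
  have q: "Q K x = n/m" unfolding Q_def w using s v m n
    by (metis add_divide_distrib div_self less_irrefl real_sqrt_divide n_def m_def)
  have vsq: "sqrt (x - 4 * K) = v" by (simp add: v_def)
  have vs: "1 + v / s = n^2 / m^2" using s m n by (simp add: field_simps)
  have pp: "2 powr (1/4) > (0::real)" by simp
  show ?thesis unfolding sq e1 e2 p1 p2 vsq Pt_def q w vs using s v m n assms pp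
    by (simp add: field_simps power2_eq_square power3_eq_cube) 
qed


lemma alg_tt:
  fixes r w y d \<beta> \<kappa> a a1 c c1 s p1 p2 SA SA1 SC1 SC2 SV W1 :: real
  assumes r: "r > 0" and w: "w > 0" and y: "y > 0" and ye: "y = 1 + w"
   and "c = 1" "c1 = 0" "SC1 = 0" "SC2 = 0" "SV = 0"
   and "W1 = (1 - w) * y/(2 * r * w)"
   and "a = 2 * w/y" "a1 = 2 * W1/y^2"
   and "s = d * y" "p1 = 3/2 * d * W1"
   and "SA = 3 * \<beta>/8 * s^2" "SA1 = 3 * \<beta>/4 * s"
  shows "SA * (a^2 * (-2 * r * a * c * a1 - a^2 * (c - 2 * r * c1) + c^3)) / (r^2 * c^3)
        + SC1 * (a^4 * p2 / c^2 - a^3 * p1 * (-r * c * a1 + r * a * c1 - 2 * c^2) / (r * c^3))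
        - 2 * a^3 * (a - c) * p1 * SA1 / (r * c^2)
        + a^4 * p1^2 * SC2 / c^2
        - \<beta> * a^4 * p1^2 / (2 * c^2)
        + \<kappa>^2 * a^2 * SV = 0"
proof -
  show ?thesis apply (simp only: assms(5-))
    using r w y by (simp add: field_simps) (simp add: ye algebra_simps eval_nat_numeral)
qed

lemma alg_rr:
  fixes r w y d \<beta> \<kappa> a a1 c s p1 SA SC1 SV W1 :: real
  assumes r: "r > 0" and w: "w > 0" and y: "y > 0" and ye: "y = 1 + w"
   and "c = 1" "SC1 = 0" "SV = 0"
   and "W1 = (1 - w) * y/(2 * r * w)"
   and "a = 2 * w/y" "a1 = 2 * W1/y^2"
   and "s = d * y" "p1 = 3/2 * d * W1"
   and "SA = 3 * \<beta>/8 * s^2"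
  shows "- (2 * r * a * a1 + a^2 - c^2) * SA / (r^2 * a^2)
        + (a1 / a + 2 / r) * p1 * SC1
        + \<kappa>^2 * c^2 * SV / a^2
        + 1/2 * \<beta> * p1^2 = 0"
proof -
  show ?thesis apply (simp only: assms(5-))
    using r w y by (simp add: field_simps) (simp add: ye algebra_simps eval_nat_numeral)
qed

lemma alg_th:
  fixes r w y d \<beta> \<kappa> a a1 a2 c c1 s p1 p2 SA SA1 SC1 SC2 SV W1 W2 :: real
  assumes r: "r > 0" and w: "w > 0" and y: "y > 0" and ye: "y = 1 + w"
   and "c = 1" "c1 = 0" "SC1 = 0" "SC2 = 0" "SV = 0"
   and "W1 = (1 - w) * y/(2 * r * w)"
   and "W2 = -(1 - w) * y/(r^2 * w) - ((1 - w) * y)^2/(4 * r^2 * w^3)"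
   and "a = 2 * w/y" "a1 = 2 * W1/y^2" "a2 = 2 * W2/y^2 - 4 * W1^2/y^3"
   and "s = d * y" "p1 = 3/2 * d * W1"
   and "SA = 3 * \<beta>/8 * s^2" "SA1 = 3 * \<beta>/4 * s"
  shows "- a * p1 * (r * a1 + a - c) * SA1 / (r * c^2)
        + SC1 * (a * p1 * (r * c * a1 - r * a * c1 + c^2) / (r * c^3) + a^2 * p2 / c^2)
        + SA * (-r * c * a1^2 + a * (r * a1 * c1 - c * (r * a2 + 2 * a1)) + a^2 * c1) / (r * c^3)
        + a^2 * p1^2 * SC2 / c^2
        - \<beta> * a^2 * p1^2 / (2 * c^2)
        + \<kappa>^2 * SV = 0"
proof -
  show ?thesis apply (simp only: assms(5-))
    using r w y by (simp add: field_simps) (simp add: ye algebra_simps eval_nat_numeral)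
qed

lemma alg_psi:
  fixes r w y d \<beta> \<kappa> a a1 a2 c c1 s p1 p2 SA1 SC1 SV1 W1 W2 :: real
  assumes r: "r > 0" and w: "w > 0" and y: "y > 0" and ye: "y = 1 + w"
   and "c = 1" "c1 = 0" "SC1 = 0" "SV1 = 0"
   and "W1 = (1 - w) * y/(2 * r * w)"
   and "W2 = -(1 - w) * y/(r^2 * w) - ((1 - w) * y)^2/(4 * r^2 * w^3)"
   and "a = 2 * w/y" "a1 = 2 * W1/y^2" "a2 = 2 * W2/y^2 - 4 * W1^2/y^3"
   and "s = d * y" "p1 = 3/2 * d * W1" "p2 = 3/2 * d * (W2 + W1^2/(2 * y))"
   and "SA1 = 3 * \<beta>/4 * s"
  shows "(a - c) * (2 * r * a1 + a - c) * SA1 / (r^2 * c^2)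
        + \<beta> * a * p1 * (2 * r * c * a1 + a * (2 * c - r * c1)) / (r * c^3)
        + \<beta> * a^2 * p2 / c^2
        + \<kappa>^2 * SV1
        + SC1 * (r * c * a1 * (r * a1 - 2 * c) + a * (-(r^2) * a1 * c1 + r * c * (r * a2 + 6 * a1) - 2 * c^2)
                 + 2 * a^2 * (c - r * c1)) / (r^2 * c^3) = 0"
proof -
  show ?thesis apply (simp only: assms(5-))
    using r w y by (simp add: field_simps) (simp add: ye algebra_simps eval_nat_numeral)
qed


theorem mainTheorem6:
  fixes \<beta> \<psi>\<^sub>0 \<kappa> K :: real
  assumes "\<kappa> > 0" and "K \<noteq> 0"
  defines "I \<equiv> {r::real. r > 0 \<and> r > 4 * K}"
    and "cC \<equiv> (\<lambda>s::real. 0::real)"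
    and "cV \<equiv> (\<lambda>s::real. 0::real)"
    and "cA \<equiv> (\<lambda>s::real. 3 * \<beta> / 8 * s^2)"
    and "C \<equiv> (\<lambda>r::real. 1::real)"
    and "A \<equiv> (\<lambda>r::real. 2 - r / (2*K) + sqrt (r * (r - 4*K)) / (2*K))"
    and "\<psi> \<equiv> (\<lambda>r::real. \<psi>\<^sub>0 * (sqrt (r * (r - 4*K)) - 4*K + r)
                 * (sqrt (r * (r - 4*K)) - 2*K + r) powr (1/4)
                 / (3 * K * r powr (3/4) * sqrt (r - 4*K)))"
  shows "(\<forall>r\<in>I. E_tt \<beta> \<kappa> cA cC cV A C \<psi> r = 0 \<and> E_rr \<beta> \<kappa> cA cC cV A C \<psi> r = 0
                \<and> E_thth \<beta> \<kappa> cA cC cV A C \<psi> r = 0 \<and> E_psi \<beta> \<kappa> cA cC cV A C \<psi> r = 0)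
         \<and> (A \<longlongrightarrow> 1) at_top
         \<and> (K > 0 \<longrightarrow> A (4*K) = 0)"
proof -
  have Ieq: "I = {0<..} \<inter> {4*K<..}" unfolding I_def by auto
  have openI: "open I" unfolding Ieq by (intro open_Int open_greaterThan)
  define c where "c = \<psi>\<^sub>0/(3*K*2 powr (1/4))"
  have AI: "\<And>y. y \<in> I \<Longrightarrow> A y = At K y" unfolding I_def A_def using Aeq[OF assms(2)] by auto
  have PI: "\<And>y. y \<in> I \<Longrightarrow> \<psi> y = Pt K c y" unfolding I_def \<psi>_def c_def using Peq[OF assms(2)] by auto
  have dAt': "\<And>y. y \<in> I \<Longrightarrow> (At K has_real_derivative A1 K y) (at y)" using dAt unfolding I_def by auto
  have dA: "\<And>y. y \<in> I \<Longrightarrow> (A has_real_derivative A1 K y) (at y)" using transf[OF openI AI dAt'] .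
  have dA1': "\<And>y. y \<in> I \<Longrightarrow> (A1 K has_real_derivative A2 K y) (at y)" using dA1 unfolding I_def by auto
  have dPt': "\<And>y. y \<in> I \<Longrightarrow> (Pt K c has_real_derivative P1 K c y) (at y)" using dPt unfolding I_def by auto
  have dP: "\<And>y. y \<in> I \<Longrightarrow> (\<psi> has_real_derivative P1 K c y) (at y)" using transf[OF openI PI dPt'] .
  have dP1': "\<And>y. y \<in> I \<Longrightarrow> (P1 K c has_real_derivative P2 K c y) (at y)" using dP1 unfolding I_def by auto
  have part1: "\<forall>r\<in>I. E_tt \<beta> \<kappa> cA cC cV A C \<psi> r = 0 \<and> E_rr \<beta> \<kappa> cA cC cV A C \<psi> r = 0
                \<and> E_thth \<beta> \<kappa> cA cC cV A C \<psi> r = 0 \<and> E_psi \<beta> \<kappa> cA cC cV A C \<psi> r = 0"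
  proof
    fix r assume r: "r \<in> I"
    have r0: "0 < r" "4*K < r" using r unfolding I_def by auto
    have wpos: "W K r > 0" using Wpos[OF r0] .
    have ypos: "1 + W K r > 0" using wpos by simp
    have a: "A r = 2 * W K r/(1 + W K r)" using AI[OF r] by (simp add: At_def)
    have a1: "deriv A r = 2 * W1 K r/(1 + W K r)^2"
      using deriv2_open(1)[OF openI r dA dA1'] by (simp add: A1_def)
    have a2: "deriv (deriv A) r = 2 * W2 K r/(1 + W K r)^2 - 4 * (W1 K r)^2/(1 + W K r)^3"
      using deriv2_open(2)[OF openI r dA dA1'] by (simp add: A2_def)
    have s: "\<psi> r = (c * Q K r) * (1 + W K r)" using PI[OF r] by (simp add: Pt_def algebra_simps)
    have p1: "deriv \<psi> r = 3/2 * (c * Q K r) * W1 K r"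
      using deriv2_open(1)[OF openI r dP dP1'] by (simp add: P1_def algebra_simps)
    have p2: "deriv (deriv \<psi>) r = 3/2 * (c * Q K r) * (W2 K r + (W1 K r)^2/(2 * (1 + W K r)))"
      using deriv2_open(2)[OF openI r dP dP1'] P2alt[OF r0] by simp
    note w1 = W1alt[OF r0] and w2 = W2alt[OF r0]
    have cc: "C r = 1" "deriv C r = 0" unfolding C_def by simp_all
    have sc: "deriv cC (\<psi> r) = 0" "deriv (deriv cC) (\<psi> r) = 0" "cV (\<psi> r) = 0" "deriv cV (\<psi> r) = 0"
      unfolding cC_def cV_def by simp_all
    have dcA: "(cA has_real_derivative 3 * \<beta> / 4 * \<psi> r) (at (\<psi> r))" unfolding cA_def
      by (rule derivative_eq_intros refl | simp)+
    have sa: "cA (\<psi> r) = 3 * \<beta> / 8 * (\<psi> r)^2" "deriv cA (\<psi> r) = 3 * \<beta> / 4 * \<psi> r"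
      using DERIV_imp_deriv[OF dcA] unfolding cA_def by simp_all
    show "E_tt \<beta> \<kappa> cA cC cV A C \<psi> r = 0 \<and> E_rr \<beta> \<kappa> cA cC cV A C \<psi> r = 0
                \<and> E_thth \<beta> \<kappa> cA cC cV A C \<psi> r = 0 \<and> E_psi \<beta> \<kappa> cA cC cV A C \<psi> r = 0"
    proof (intro conjI)
      show "E_tt \<beta> \<kappa> cA cC cV A C \<psi> r = 0" unfolding E_tt_def Let_def
        by (rule alg_tt[OF r0(1) wpos ypos refl cc sc(1) sc(2) sc(3) w1 a a1 s p1 sa])
      show "E_rr \<beta> \<kappa> cA cC cV A C \<psi> r = 0" unfolding E_rr_def Let_def
        by (rule alg_rr[OF r0(1) wpos ypos refl cc(1) sc(1) sc(3) w1 a a1 s p1 sa(1)])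
      show "E_thth \<beta> \<kappa> cA cC cV A C \<psi> r = 0" unfolding E_thth_def Let_def
        by (rule alg_th[OF r0(1) wpos ypos refl cc sc(1) sc(2) sc(3) w1 w2 a a1 a2 s p1 sa])
      show "E_psi \<beta> \<kappa> cA cC cV A C \<psi> r = 0" unfolding E_psi_def Let_def
        by (rule alg_psi[OF r0(1) wpos ypos refl cc sc(1) sc(4) w1 w2 a a1 a2 s p1 p2 sa(2)])
    qed
  qed
  have lim: "(A \<longlongrightarrow> 1) at_top"
  proof -
    have t0: "((\<lambda>x. 4*K/x) \<longlongrightarrow> 0) at_top"
      by (intro tendsto_divide_0[OF tendsto_const] filterlim_at_top_imp_at_infinity filterlim_ident)
    have tW: "((\<lambda>x. sqrt (1 - 4*K/x)) \<longlongrightarrow> sqrt (1 - 0)) at_top"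
      by (intro tendsto_intros t0)
    have tA: "((\<lambda>x. 2 * sqrt (1 - 4*K/x) / (1 + sqrt (1 - 4*K/x))) \<longlongrightarrow> 2 * 1 / (1 + 1)) at_top"
      using tW by (intro tendsto_intros) auto
    have ev: "eventually (\<lambda>x. 2 * sqrt (1 - 4*K/x) / (1 + sqrt (1 - 4*K/x)) = A x) at_top"
      using eventually_gt_at_top[of "max 0 (4*K)"]
    proof eventually_elim
      case (elim x)
      hence "x \<in> I" unfolding I_def by auto
      thus ?case using AI by (simp add: At_def W_def)
    qed
    show ?thesis using Lim_transform_eventually[OF tA ev] by simp
  qed
  have h: "K > 0 \<longrightarrow> A (4*K) = 0" unfolding A_def by simp
  show ?thesis using part1 lim h by blast
qed

end
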